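(* Let $p$ be a prime, $K$ a finite extension of $\mathbf Q_p$, and let $\nu$ be the valuation on $\mathbf C_p$ normalized by $\nu(p)=1$, $|\cdot|$ the corresponding absolute value. Let $$f(t,x)=x^n+c_{n-1}(t)x^{n-1}+\cdots+c_1(t)x+c_0(t),\qquad c_i(t)\in\mathcal O_K[[t]],$$ and consider the map $\pi$ from the locus $\{(t,x): |t|<1,\ |x|<1,\ f(t,x)=0\}$ to the open unit $t$-disk, $(t,x)\mapsto t$. Assume that $x=0$ is a simple root of $f(0,x)$ (the point $b$), let $D_{vert}$ denote the nonempty set of the remaining roots of $f(0,x)$ in the open unit disk $\{|x|<1\}$, let $e$ be the number of roots of $f(0,x)$ with $|x|<1$ counted with multiplicity (so $e=1+\#D_{vert}$ when these roots are simple), and let $v_{vert}:=\max_{x'\in D_{vert}}\nu(x')$. Then for every $t'\in\mathbf C_p$ with $|t'|<|p^{e\cdot v_{vert}}|$ there is exactly one $x'\in\mathbf C_p$ with $|x'|<|p^{v_{vert}}|$ and $f(t',x')=0$.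
   Context: This is the local description of the map from a formal neighbourhood of a point $b$ on a (smooth at $b_p$) modular curve to the $j$-line with parameter $t=j-j_E$: $x$ is a formal parameter at $b$ with $x(b)=0$, and $D_{vert}$ is the set of other points of the formal fibre over $t=0$. $\mathbf D(r,x)$ denotes the open disk $\{|x|<r\}$. *)

theory Defs
  imports Complex_Main "HOL-Computational_Algebra.Computational_Algebra"
begin

definition nonarch_abs :: "('a::field \<Rightarrow> real) \<Rightarrow> bool" where
  "nonarch_abs av \<longleftrightarrow>
     (\<forall>x. av x \<ge> 0) \<and> (\<forall>x. av x = 0 \<longleftrightarrow> x = 0) \<and>
     (\<forall>x y. av (x * y) = av x * av y) \<and>
     (\<forall>x y. av (x + y) \<le> max (av x) (av y))"

definition av_complete :: "('a::field \<Rightarrow> real) \<Rightarrow> bool" where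
  "av_complete av \<longleftrightarrow>
     (\<forall>X::nat \<Rightarrow> 'a. (\<forall>\<epsilon>>0. \<exists>N. \<forall>m\<ge>N. \<forall>k\<ge>N. av (X m - X k) < \<epsilon>) \<longrightarrow>
        (\<exists>L. (\<lambda>m. av (X m - L)) \<longlonglongrightarrow> 0))"

definition alg_closed_field :: "'a::field itself \<Rightarrow> bool" where
  "alg_closed_field _ \<longleftrightarrow> (\<forall>q::'a poly. degree q > 0 \<longrightarrow> (\<exists>x. poly q x = 0))"

definition av_sums :: "('a::field \<Rightarrow> real) \<Rightarrow> (nat \<Rightarrow> 'a) \<Rightarrow> 'a \<Rightarrow> bool" where
  "av_sums av g s \<longleftrightarrow> (\<lambda>N. av ((\<Sum>k<N. g k) - s)) \<longlonglongrightarrow> 0"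

definition ps_eval :: "('a::field \<Rightarrow> real) \<Rightarrow> 'a fps \<Rightarrow> 'a \<Rightarrow> 'a" where
  "ps_eval av a t = (THE s. av_sums av (\<lambda>k. fps_nth a k * t ^ k) s)"

definition fval :: "('a::field \<Rightarrow> real) \<Rightarrow> nat \<Rightarrow> (nat \<Rightarrow> 'a fps) \<Rightarrow> 'a \<Rightarrow> 'a \<Rightarrow> 'a" where
  "fval av n c t x = x ^ n + (\<Sum>i<n. ps_eval av (c i) t * x ^ i)"

definition f0poly :: "nat \<Rightarrow> (nat \<Rightarrow> 'a::field fps) \<Rightarrow> 'a poly" where
  "f0poly n c = monom 1 n + (\<Sum>i<n. monom (fps_nth (c i) 0) i)"

end

theory Submission imports Defs begin

definition NN :: "('a::field \<Rightarrow> real) \<Rightarrow> 'a poly \<Rightarrow> nat" where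
  "NN av Q = (\<Sum>w\<in>{w. av w < 1 \<and> poly Q w = 0}. order w Q)"

lemma Pcoeff: "coeff (monom 1 n + (\<Sum>i<n. monom (\<beta> i) i)) j = (if j = n then 1 else if j < n then \<beta> j else (0::'a::field))"
proof -
  have "coeff (monom 1 n + (\<Sum>i<n. monom (\<beta> i) i)) j = (if n = j then 1 else 0) + (\<Sum>i<n. (if i = j then \<beta> i else 0))"
    by (simp add: coeff_sum coeff_monom)
  also have "(\<Sum>i<n. (if i = j then \<beta> i else 0)) = (if j < n then \<beta> j else 0)"
    by (simp add: sum.delta)
  finally show ?thesis by auto
qed

lemma Ppoly: "poly (monom 1 n + (\<Sum>i<n. monom (\<beta> i) i)) x = x ^ n + (\<Sum>i<n. \<beta> i * x ^ (i::nat))"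
  for x :: "'a::field"
  by (simp add: poly_monom poly_sum)

lemma Pdeg: "degree (monom 1 n + (\<Sum>i<n. monom (\<beta> i) i)) = n" (is "degree ?P = n")
  for \<beta> :: "nat \<Rightarrow> 'a::field"
proof (rule antisym)
  show "degree ?P \<le> n" by (rule degree_le) (auto simp only: Pcoeff, auto)
  show "n \<le> degree ?P" by (rule le_degree) (simp only: Pcoeff, simp)
qed

lemma Plead: "lead_coeff (monom 1 n + (\<Sum>i<n. monom (\<beta> i) i)) = (1::'a::field)"
  by (simp only: Pdeg Pcoeff, simp)

context
  fixes av :: "'a::field \<Rightarrow> real"
  assumes na: "nonarch_abs av"
begin

lemma av_nonneg: "av x \<ge> 0" using na unfolding nonarch_abs_def by blast
lemma av_zero_iff: "av x = 0 \<longleftrightarrow> x = 0" using na unfolding nonarch_abs_def by blast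
lemma av_mult: "av (x * y) = av x * av y" using na unfolding nonarch_abs_def by blast
lemma av_add: "av (x + y) \<le> max (av x) (av y)" using na unfolding nonarch_abs_def by blast
lemma av_0[simp]: "av 0 = 0" using av_zero_iff by blast
lemma av_1[simp]: "av 1 = 1"
proof -
  have "av 1 = av 1 * av 1" using av_mult[of 1 1] by simp
  moreover have "av 1 \<noteq> 0" using av_zero_iff by simp
  ultimately show ?thesis by (metis mult_cancel_right1)
qed
lemma av_m1: "av (-1) = 1"
proof -
  have "av (-1) * av (-1) = 1" using av_mult[of "-1" "-1"] by simp
  moreover have "av (-1) \<ge> 0" by (rule av_nonneg)
  ultimately have "(av (-1) - 1) * (av (-1) + 1) = 0" by (simp add: algebra_simps)
  moreover have "av (-1) + 1 \<noteq> 0" using \<open>av (-1) \<ge> 0\<close> by linarith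
  ultimately show ?thesis by simp
qed
lemma av_neg: "av (-x) = av x"
  using av_mult[of "-1" x] av_m1 by simp
lemma av_diff: "av (x - y) \<le> max (av x) (av y)"
  using av_add[of x "-y"] av_neg[of y] by simp
lemma av_power: "av (x ^ k) = av x ^ k"
  by (induction k) (auto simp: av_mult)
lemma av_add_eq: assumes "av y < av x" shows "av (x + y) = av x"
proof -
  have "av x = av ((x + y) - y)" by simp
  also have "\<dots> \<le> max (av (x+y)) (av y)" by (rule av_diff)
  finally have "av x \<le> av (x+y)" using assms by linarith
  moreover have "av (x+y) \<le> av x" using av_add[of x y] assms by linarith
  ultimately show ?thesis by linarith
qed
lemma av_sum_le: assumes "finite I" "\<forall>i\<in>I. av (f i) \<le> M" "0 \<le> M" shows "av (sum f I) \<le> M"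
  using assms
proof (induction I rule: finite_induct)
  case empty then show ?case by simp
next
  case (insert x F)
  then show ?case using av_add[of "f x" "sum f F"] by (simp add: max_def split: if_splits)
qed
lemma av_sum_less: assumes "finite I" "\<forall>i\<in>I. av (f i) < M" "0 < M" shows "av (sum f I) < M"
  using assms
proof (induction I rule: finite_induct)
  case empty then show ?case by simp
next
  case (insert x F)
  then show ?case using av_add[of "f x" "sum f F"] by (simp add: max_def split: if_splits)
qed

lemma av_sums_unique: assumes "av_sums av g s" "av_sums av g s'" shows "s = s'"
proof -
  let ?S = "\<lambda>N. (\<Sum>k<N. g k)"
  have l: "(\<lambda>N. av (?S N - s) + av (?S N - s')) \<longlonglongrightarrow> 0"
    using tendsto_add[OF assms[unfolded av_sums_def]] by simp
  have "av (s - s') \<le> 0"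
  proof (rule LIMSEQ_le_const[OF l], intro exI allI impI)
    fix N
    have "s - s' = (?S N - s') - (?S N - s)" by simp
    then have "av (s - s') \<le> max (av (?S N - s')) (av (?S N - s))" using av_diff by metis
    then show "av (s - s') \<le> av (?S N - s) + av (?S N - s')" using av_nonneg[of "?S N - s"] av_nonneg[of "?S N - s'"] by linarith
  qed
  then show ?thesis using av_nonneg[of "s - s'"] av_zero_iff[of "s - s'"] by simp
qed

lemma ps_conv:
  assumes comp: "av_complete av" and a: "\<forall>k. av (fps_nth a k) \<le> 1" and t: "av t < 1"
  shows "av (ps_eval av a t - fps_nth a 0) \<le> av t"
proof -
  define g where "g = (\<lambda>k. fps_nth a k * t ^ k)"
  define S where "S = (\<lambda>N. (\<Sum>k<N. g k))"
  have gk: "av (g k) \<le> av t ^ k" for k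
    unfolding g_def av_mult av_power
    by (rule mult_left_le_one_le) (use a av_nonneg in auto)
  have tk: "av t ^ j \<le> av t ^ k" if "k \<le> j" for j k
    using that t av_nonneg[of t] by (simp add: power_decreasing)
  have diff: "av (S m - S k) \<le> av t ^ k" if "k \<le> m" for m k
  proof -
    have "S m - S k = sum g ({..<m} - {..<k})" unfolding S_def
      using that by (subst sum_diff) auto
    also have "av \<dots> \<le> av t ^ k"
      by (rule av_sum_le) (use gk tk av_nonneg[of t] in \<open>auto intro: order_trans[OF gk tk]\<close>)
    finally show ?thesis .
  qed
  have diff2: "av (S m - S k) \<le> av t ^ N" if "m \<ge> N" "k \<ge> N" for m k N
  proof (cases "k \<le> m")
    case True then show ?thesis using diff[of k m] tk[of N k] that by linarith
  next
    case False
    then have "av (S k - S m) \<le> av t ^ N" using diff[of m k] tk[of N m] that by linarith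
    moreover have "S m - S k = - (S k - S m)" by simp
    ultimately show ?thesis using av_neg by metis
  qed
  have cauchy: "\<forall>\<epsilon>>0. \<exists>N. \<forall>m\<ge>N. \<forall>k\<ge>N. av (S m - S k) < \<epsilon>"
  proof (intro allI impI)
    fix \<epsilon> :: real assume "\<epsilon> > 0"
    obtain N where N: "av t ^ N < \<epsilon>"
    proof (cases "av t = 0")
      case True then show ?thesis using that[of 1] \<open>\<epsilon> > 0\<close> by simp
    next
      case False then show ?thesis using real_arch_pow_inv[OF \<open>\<epsilon> > 0\<close> t] that by blast
    qed
    then show "\<exists>N. \<forall>m\<ge>N. \<forall>k\<ge>N. av (S m - S k) < \<epsilon>"
      using diff2 by (meson le_less_trans)
  qed
  obtain L where L: "(\<lambda>m. av (S m - L)) \<longlonglongrightarrow> 0"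
    using comp cauchy unfolding av_complete_def by blast
  have sums: "av_sums av g L" unfolding av_sums_def using L unfolding S_def .
  have pe: "ps_eval av a t = L"
    unfolding ps_eval_def g_def[symmetric]
    using sums av_sums_unique by blast
  have b: "av (S N - fps_nth a 0) \<le> av t" if "N \<ge> 1" for N
  proof -
    have "S N - fps_nth a 0 = sum g ({..<N} - {..<1})" unfolding S_def
      using that by (subst sum_diff) (auto simp: g_def)
    also have "av \<dots> \<le> av t"
      by (rule av_sum_le) (use gk tk[of 1] av_nonneg[of t] in \<open>auto intro: order_trans[OF gk tk[of 1, simplified]]\<close>)
    finally show ?thesis .
  qed
  have l2: "(\<lambda>N. av (S N - L) + av t) \<longlonglongrightarrow> av t"
    using tendsto_add[OF L tendsto_const[of "av t"]] by simp
  have "av (L - fps_nth a 0) \<le> av t"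
  proof (rule LIMSEQ_le_const[OF l2], intro exI allI impI)
    fix N :: nat assume "N \<ge> 1"
    have "L - fps_nth a 0 = (S N - fps_nth a 0) - (S N - L)" by simp
    then have "av (L - fps_nth a 0) \<le> max (av (S N - fps_nth a 0)) (av (S N - L))" using av_diff by metis
    then show "av (L - fps_nth a 0) \<le> av (S N - L) + av t"
      using b[OF \<open>N \<ge> 1\<close>] av_nonneg[of "S N - L"] av_nonneg[of t] by linarith
  qed
  then show ?thesis using pe by simp
qed

lemma lin_coeff0: "coeff ([:-z,1:]*Q1) 0 = - z * coeff Q1 0" for z :: 'a
  by (simp add: mult_pCons_left algebra_simps)
lemma lin_coeff0_old: "coeff ([:-z,1:]*Q1) 0 = - z * coeff Q1 0"
  by (simp add: mult_pCons_left algebra_simps)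
lemma lin_coeffS: "coeff ([:-z,1:]*Q1) (Suc k) = coeff Q1 k - z * coeff Q1 (Suc k)" for z :: 'a
  by (simp add: mult_pCons_left algebra_simps)

lemma lin_factor:
  fixes Q :: "'a poly"
  assumes alg: "alg_closed_field TYPE('a)" and d: "degree Q > 0"
  obtains z Q1 where "Q = [:-z,1:]*Q1" "Q1 \<noteq> 0" "degree Q1 < degree Q"
proof -
  have "\<exists>z. poly Q z = 0" using alg d unfolding alg_closed_field_def by blast
  then obtain z where "poly Q z = 0" by blast
  then obtain Q1 where Q: "Q = [:-z,1:]*Q1" using poly_eq_0_iff_dvd by (metis dvdE)
  have "Q \<noteq> 0" using d by auto
  then have "Q1 \<noteq> 0" using Q by auto
  moreover have "degree ([:-z,1:]*Q1) = degree [:-z,1:] + degree Q1"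
    by (rule degree_mult_eq) (use \<open>Q1 \<noteq> 0\<close> in auto)
  then have "degree Q = 1 + degree Q1" using Q by simp
  ultimately show ?thesis using that Q by simp
qed

lemma coeff_bound:
  assumes alg: "alg_closed_field TYPE('a)"
  shows "Q \<noteq> 0 \<Longrightarrow> 0 \<le> r \<Longrightarrow> (\<forall>z. poly Q z = 0 \<longrightarrow> r \<le> av z) \<Longrightarrow> av (coeff Q j) * r^j \<le> av (coeff Q 0)"
proof (induction "degree Q" arbitrary: Q j rule: less_induct)
  case less
  show ?case
  proof (cases "degree Q = 0")
    case True
    then show ?thesis by (cases j) (auto simp: coeff_eq_0 av_nonneg)
  next
    case False
    then obtain z Q1 where Q: "Q = [:-z,1:]*Q1" "Q1 \<noteq> 0" "degree Q1 < degree Q"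
      using lin_factor[OF alg] by blast
    have rz: "r \<le> av z" using less.prems Q(1) by auto
    have r1: "\<forall>w. poly Q1 w = 0 \<longrightarrow> r \<le> av w" using less.prems Q(1) by auto
    have IH: "av (coeff Q1 i) * r^i \<le> av (coeff Q1 0)" for i
      using less.hyps[OF Q(3) Q(2) less.prems(2) r1] .
    show ?thesis
    proof (cases j)
      case 0 then show ?thesis by simp
    next
      case (Suc k)
      have c0: "av (coeff Q 0) = av z * av (coeff Q1 0)"
        using Q(1) lin_coeff0 av_mult av_neg by metis
      have m: "av (coeff Q j) \<le> max (av (coeff Q1 k)) (av (z * coeff Q1 (Suc k)))"
        using Q(1) Suc lin_coeffS av_diff by metis
      have A: "av (coeff Q1 k) * r^j \<le> av (coeff Q 0)"
      proof -
        have "av (coeff Q1 k) * r^j = (av (coeff Q1 k) * r^k) * r" using Suc by simp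
        also have "\<dots> \<le> av (coeff Q1 0) * r" using IH less.prems(2) by (rule mult_right_mono)
        also have "\<dots> \<le> av (coeff Q1 0) * av z" using rz av_nonneg by (rule mult_left_mono)
        finally show ?thesis using c0 by (simp add: mult.commute)
      qed
      have B: "av (z * coeff Q1 (Suc k)) * r^j \<le> av (coeff Q 0)"
        using mult_left_mono[OF IH[of "Suc k"] av_nonneg[of z]] c0 Suc by (simp add: av_mult mult.assoc)
      have "0 \<le> r^j" using less.prems(2) by simp
      then show ?thesis using m A B
        by (smt (verit) mult_right_mono)
    qed
  qed
qed

lemma NN_lin:
  fixes z :: 'a
  assumes "Q1 \<noteq> 0"
  shows "NN av ([:-z,1:]*Q1) = (if av z < 1 then 1 else 0) + NN av Q1"
proof -
  define P where "P = [:-z,1:]*Q1"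
  have P0: "P \<noteq> 0" using assms unfolding P_def by (metis mult_eq_0_iff pCons_eq_0_iff one_neq_zero)
  define S where "S = {w. av w < 1 \<and> poly P w = 0}"
  define S1 where "S1 = {w. av w < 1 \<and> poly Q1 w = 0}"
  have fin: "finite S" unfolding S_def using poly_roots_finite[OF P0] by (rule rev_finite_subset) auto
  have ord: "order w P = (if w = z then 1 else 0) + order w Q1" for w
  proof -
    have "order w P = order w [:-z,1:] + order w Q1" unfolding P_def using P0 P_def order_mult by blast
    moreover have "order w [:-z,1:] = (if w = z then 1 else 0)"
    proof (cases "w = z")
      case True then show ?thesis using order_power_n_n[of z 1] by simp
    next
      case False then have pz: "poly [:-z,1:] w \<noteq> 0" by simp
      show ?thesis using False order_0I[OF pz] by simp
    qed
    ultimately show ?thesis by simp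
  qed
  have "NN av P = (\<Sum>w\<in>S. (if w = z then 1 else 0)) + (\<Sum>w\<in>S. order w Q1)"
    unfolding NN_def S_def[symmetric] ord by (simp add: sum.distrib)
  also have "(\<Sum>w\<in>S. (if w = z then 1 else 0)) = (if av z < 1 then 1 else (0::nat))"
    using fin by (simp add: sum.delta S_def P_def)
  also have "(\<Sum>w\<in>S. order w Q1) = (\<Sum>w\<in>S1. order w Q1)"
    by (rule sum.mono_neutral_right) (use fin in \<open>auto simp: S_def S1_def P_def order_0I\<close>)
  finally show ?thesis unfolding P_def NN_def S1_def .
qed

lemma lead_bound:
  assumes alg: "alg_closed_field TYPE('a)"
  shows "Q \<noteq> 0 \<Longrightarrow> 0 < r \<Longrightarrow> r \<le> 1 \<Longrightarrow> (\<forall>z. poly Q z = 0 \<longrightarrow> r \<le> av z) \<Longrightarrow> av (lead_coeff Q) * r ^ NN av Q \<le> av (coeff Q 0)"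
proof (induction "degree Q" arbitrary: Q rule: less_induct)
  case less
  show ?case
  proof (cases "degree Q = 0")
    case True
    then have "Q = [:coeff Q 0:]" by (metis degree_0_id)
    then have "poly Q w \<noteq> 0" for w using less.prems(1) by (metis poly_const_conv pCons_eq_0_iff)
    then have "NN av Q = 0" unfolding NN_def by simp
    then show ?thesis using True by simp
  next
    case False
    then obtain z Q1 where Q: "Q = [:-z,1:]*Q1" "Q1 \<noteq> 0" "degree Q1 < degree Q"
      using lin_factor[OF alg] by blast
    have rz: "r \<le> av z" using less.prems Q(1) by auto
    have r1: "\<forall>w. poly Q1 w = 0 \<longrightarrow> r \<le> av w" using less.prems Q(1) by auto
    have IH: "av (lead_coeff Q1) * r ^ NN av Q1 \<le> av (coeff Q1 0)"
      using less.hyps[OF Q(3) Q(2) less.prems(2,3) r1] .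
    have c0: "av (coeff Q 0) = av z * av (coeff Q1 0)"
      using Q(1) lin_coeff0 av_mult av_neg by metis
    have "lead_coeff ([:-z,1:]*Q1) = lead_coeff [:-z,1:] * lead_coeff Q1" by (rule lead_coeff_mult)
    then have lc: "lead_coeff Q = lead_coeff Q1" using Q(1) by simp
    have N: "NN av Q = (if av z < 1 then 1 else 0) + NN av Q1" using Q(1) NN_lin[OF Q(2)] by simp
    show ?thesis
    proof (cases "av z < 1")
      case True
      then have "av (lead_coeff Q) * r ^ NN av Q = r * (av (lead_coeff Q1) * r ^ NN av Q1)"
        using N lc by simp
      also have "\<dots> \<le> av z * av (coeff Q1 0)"
        using mult_mono[OF rz IH] av_nonneg less.prems(2) by (simp add: zero_le_mult_iff)
      finally show ?thesis using c0 by simp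
    next
      case False
      then have "av (lead_coeff Q) * r ^ NN av Q = 1 * (av (lead_coeff Q1) * r ^ NN av Q1)"
        using N lc by simp
      also have "\<dots> \<le> av z * av (coeff Q1 0)"
        using mult_mono[OF _ IH, of 1 "av z"] av_nonneg False less.prems(2) by simp
      finally show ?thesis using c0 by simp
    qed
  qed
qed

end

theorem proposition4p7:
  fixes av :: "'a::field \<Rightarrow> real" and p n :: nat and c :: "nat \<Rightarrow> 'a fps"
  assumes "prime p"
    and "nonarch_abs av" and "av_complete av" and "alg_closed_field TYPE('a)"
    and "av (of_nat p) = 1 / real p"
    and "\<forall>i<n. \<forall>k. av (fps_nth (c i) k) \<le> 1"
    and "poly (f0poly n c) 0 = 0" and "order 0 (f0poly n c) = 1"
    and "{x. av x < 1 \<and> x \<noteq> 0 \<and> poly (f0poly n c) x = 0} \<noteq> {}"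
  shows "let Dvert = {x. av x < 1 \<and> x \<noteq> 0 \<and> poly (f0poly n c) x = 0};
             e = (\<Sum>x\<in>{x. av x < 1 \<and> poly (f0poly n c) x = 0}. order x (f0poly n c));
             r = Min (av ` Dvert)
         in \<forall>t'. av t' < r ^ e \<longrightarrow> (\<exists>!x'. av x' < r \<and> fval av n c t' x' = 0)"
proof -
  note na = assms(2) and comp = assms(3) and alg = assms(4) and cb = assms(6)
  define f0 where "f0 = f0poly n c"
  define Dvert where "Dvert = {x. av x < 1 \<and> x \<noteq> 0 \<and> poly f0 x = 0}"
  define e where "e = (\<Sum>x\<in>{x. av x < 1 \<and> poly f0 x = 0}. order x f0)"
  define r where "r = Min (av ` Dvert)"
  define A where "A = (\<lambda>j. coeff f0 j)"
  have f0def: "f0 = monom 1 n + (\<Sum>i<n. monom (fps_nth (c i) 0) i)"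
    unfolding f0_def f0poly_def ..
  have Acoeff: "A j = (if j = n then 1 else if j < n then fps_nth (c j) 0 else 0)" for j
    unfolding A_def f0def by (rule Pcoeff)
  have f0nz: "f0 \<noteq> 0" using Plead[of n] f0def by (metis leading_coeff_0_iff zero_neq_one)
  have lf0: "lead_coeff f0 = 1" using Plead f0def by metis
  have A0: "A 0 = 0" using assms(7) unfolding A_def f0_def by (simp add: poly_0_coeff_0)
  have n1: "n \<ge> 1"
  proof (rule ccontr)
    assume "\<not> n \<ge> 1" then have "n = 0" by simp
    then show False using A0 Acoeff[of 0] by simp
  qed
  have "poly f0 0 = 0" using assms(7) f0_def by simp
  then obtain g where g: "f0 = [:-0,1:] * g" using poly_eq_0_iff_dvd by (metis dvdE)
  have gnz: "g \<noteq> 0" using g f0nz by auto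
  have "order 0 f0 = order 0 [:-0,1::'a:] + order 0 g"
    using f0nz unfolding g by (rule order_mult)
  moreover have "order 0 [:-0,1::'a:] = 1" using order_power_n_n[of "0::'a" 1] by simp
  ultimately have "order 0 g = 0" using assms(8) f0_def by simp
  then have g0: "coeff g 0 \<noteq> 0" using order_root[of g 0] gnz by (simp add: poly_0_coeff_0)
  have AS: "A (Suc j) = coeff g j" for j
    unfolding A_def using g lin_coeffS[OF na, of "0::'a" g j] by simp
  have lg: "lead_coeff g = 1"
  proof -
    have "lead_coeff ([:-0,1:]*g) = lead_coeff [:-0,1::'a:] * lead_coeff g" by (rule lead_coeff_mult)
    then show ?thesis using g lf0 by simp
  qed
  have Dfin: "finite Dvert" unfolding Dvert_def
    using poly_roots_finite[OF f0nz] by (rule rev_finite_subset) auto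
  have Dne: "Dvert \<noteq> {}" using assms(9) unfolding Dvert_def f0_def .
  have rin: "r \<in> av ` Dvert" unfolding r_def using Dfin Dne by simp
  have rle: "r \<le> av z" if "z \<in> Dvert" for z unfolding r_def using Dfin that by simp
  obtain z0 where z0: "z0 \<in> Dvert" "r = av z0" using rin by blast
  have "av z0 \<noteq> 0" using z0 av_zero_iff[OF na] unfolding Dvert_def by blast
  then have r0: "0 < r" "r < 1" using z0 av_nonneg[OF na, of z0] unfolding Dvert_def by auto
  have groots: "\<forall>z. poly g z = 0 \<longrightarrow> r \<le> av z"
  proof (intro allI impI)
    fix z assume gz: "poly g z = 0"
    then have z0: "z \<noteq> 0" using g0 by (auto simp: poly_0_coeff_0)
    have fz: "poly f0 z = 0" using g gz by simp
    show "r \<le> av z"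
    proof (cases "av z < 1")
      case True then show ?thesis using rle z0 fz unfolding Dvert_def by blast
    next
      case False then show ?thesis using r0 by linarith
    qed
  qed
  have eN: "e = 1 + NN av g"
  proof -
    have "e = NN av f0" unfolding e_def NN_def ..
    also have "\<dots> = 1 + NN av g" using g NN_lin[OF na gnz, of 0] av_0[OF na] by simp
    finally show ?thesis .
  qed
  have LB: "r ^ NN av g \<le> av (A 1)"
    using lead_bound[OF na alg gnz r0(1) less_imp_le[OF r0(2)] groots] lg AS[of 0] av_1[OF na] by simp
  have CB: "av (A (Suc j)) * r ^ j \<le> av (A 1)" for j
    using coeff_bound[OF na alg gnz less_imp_le[OF r0(1)] groots, of j] AS[of j] AS[of 0] by simp
  have re: "r ^ e \<le> r ^ NN av g"
    using eN r0 by (simp add: mult_left_le_one_le)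
  show ?thesis
    unfolding Let_def f0_def[symmetric] Dvert_def[symmetric] e_def[symmetric] r_def[symmetric]
  proof (intro allI impI)
    fix t' assume ht: "av t' < r ^ e"
    have tA: "av t' < av (A 1)" using ht re LB by linarith
    have t1: "av t' < 1"
    proof -
      have "r ^ e \<le> 1" using r0 by (simp add: power_le_one)
      then show ?thesis using ht by linarith
    qed
    define b where "b = (\<lambda>i. ps_eval av (c i) t')"
    define Fp where "Fp = monom 1 n + (\<Sum>i<n. monom (b i) i)"
    define Bc where "Bc = (\<lambda>j. coeff Fp j)"
    have Bcoeff: "Bc j = (if j = n then 1 else if j < n then b j else 0)" for j
      unfolding Bc_def Fp_def by (rule Pcoeff)
    have Fnz: "Fp \<noteq> 0" using Plead[of n b] Fp_def by (metis leading_coeff_0_iff zero_neq_one)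
    have Fdeg: "degree Fp = n" unfolding Fp_def by (rule Pdeg)
    have dB: "av (Bc j - A j) \<le> av t'" for j
    proof -
      consider "j = n" | "j < n" | "j > n" by linarith
      then show ?thesis
      proof cases
        case 2
        then have "Bc j - A j = ps_eval av (c j) t' - fps_nth (c j) 0"
          using Bcoeff Acoeff b_def by simp
        then show ?thesis using ps_conv[OF na comp _ t1] cb 2 by simp
      qed (auto simp: Bcoeff Acoeff av_nonneg[OF na] av_0[OF na])
    qed
    have fvalF: "fval av n c t' x = poly Fp x" for x
      unfolding fval_def Fp_def Ppoly b_def ..
    have Bsplit: "av (Bc j) = av (A j)" if "av t' < av (A j)" for j
    proof -
      have "Bc j = A j + (Bc j - A j)" by simp
      then show ?thesis using av_add_eq[OF na] dB[of j] that by (metis le_less_trans)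
    qed
    have B1: "av (Bc 1) = av (A 1)" using Bsplit tA by simp
    have B0: "av (Bc 0) \<le> av t'" using dB[of 0] A0 by simp
    have Bi: "av (Bc i) \<le> max (av (A i)) (av t')" for i
    proof -
      have "Bc i = A i + (Bc i - A i)" by simp
      then have "av (Bc i) \<le> max (av (A i)) (av (Bc i - A i))" using av_add[OF na] by metis
      then show ?thesis using dB[of i] by linarith
    qed
    have A1pos: "0 < av (A 1)" using tA av_nonneg[OF na, of t'] by linarith
    show "\<exists>!x'. av x' < r \<and> fval av n c t' x' = 0"
    proof (rule ex_ex1I)
      show "\<exists>x'. av x' < r \<and> fval av n c t' x' = 0"
      proof (rule ccontr)
        assume "\<not> (\<exists>x'. av x' < r \<and> fval av n c t' x' = 0)"
        then have "\<forall>z. poly Fp z = 0 \<longrightarrow> r \<le> av z" using fvalF by (metis not_le)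
        from coeff_bound[OF na alg Fnz less_imp_le[OF r0(1)] this, of 1]
        have "av (Bc 1) * r \<le> av (Bc 0)" unfolding Bc_def by simp
        moreover have "av t' < r * r ^ NN av g" using ht eN by simp
        moreover have "r * r ^ NN av g \<le> r * av (A 1)" using LB r0 by simp
        ultimately show False using B1 B0 by (simp add: mult.commute)
      qed
    next
      fix x y assume hx: "av x < r \<and> fval av n c t' x = 0" and hy: "av y < r \<and> fval av n c t' y = 0"
      show "x = y"
      proof (rule ccontr)
        assume xy: "x \<noteq> y"
        define \<rho> where "\<rho> = max (av x) (av y)"
        have \<rho>r: "\<rho> < r" using hx hy \<rho>_def by simp
        have \<rho>0: "0 \<le> \<rho>" using av_nonneg[OF na, of x] \<rho>_def by simp
        have Bbound: "av (Bc i) * \<rho> ^ (i - 1) < av (A 1)" if "i \<ge> 2" for i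
        proof -
          have p1: "\<rho> ^ (i - 1) \<le> 1" using \<rho>0 \<rho>r r0 by (simp add: power_le_one)
          have a: "av (A i) * \<rho> ^ (i - 1) < av (A 1)"
          proof (cases "A i = 0")
            case True then show ?thesis using A1pos by (simp add: av_0[OF na])
          next
            case False
            then have "av (A i) > 0" using av_zero_iff[OF na] av_nonneg[OF na] by (metis less_le)
            moreover have "\<rho> ^ (i - 1) < r ^ (i - 1)" using \<rho>0 \<rho>r that by (simp add: power_strict_mono)
            ultimately have "av (A i) * \<rho> ^ (i - 1) < av (A i) * r ^ (i - 1)" by simp
            also have "\<dots> \<le> av (A 1)" using CB[of "i - 1"] that by (simp add: Suc_diff_Suc)
            finally show ?thesis .
          qed
          have t: "av t' * \<rho> ^ (i - 1) < av (A 1)"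
            using mult_left_le[OF p1 av_nonneg[OF na, of t']] tA by linarith
          have "av (Bc i) * \<rho> ^ (i - 1) \<le> max (av (A i)) (av t') * \<rho> ^ (i - 1)"
            using Bi[of i] \<rho>0 by (simp add: mult_right_mono)
          then show ?thesis using a t by (simp add: max_def split: if_splits)
        qed
        define M where "M = av (A 1) * av (x - y)"
        have M0: "0 < M" unfolding M_def using A1pos xy av_zero_iff[OF na, of "x - y"] av_nonneg[OF na, of "x - y"] by simp
        have "poly Fp x - poly Fp y = 0" using hx hy fvalF by simp
        then have "(\<Sum>i\<le>n. Bc i * (x ^ i - y ^ i)) = 0"
          unfolding poly_altdef Fdeg Bc_def by (simp add: sum_subtractf right_diff_distrib)
        moreover have "(\<Sum>i\<le>n. Bc i * (x ^ i - y ^ i)) = Bc 1 * (x - y) + (\<Sum>i\<in>{..n} - {1}. Bc i * (x ^ i - y ^ i))"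
          using n1 by (subst sum.remove[of _ 1]) auto
        ultimately have eq: "(\<Sum>i\<in>{..n} - {1}. Bc i * (x ^ i - y ^ i)) = - (Bc 1 * (x - y))"
          by (simp add: eq_neg_iff_add_eq_0 add.commute)
        have "av (\<Sum>i\<in>{..n} - {1}. Bc i * (x ^ i - y ^ i)) < M"
        proof (rule av_sum_less[OF na _ _ M0])
          show "finite ({..n} - {1})" by simp
          show "\<forall>i\<in>{..n} - {1}. av (Bc i * (x ^ i - y ^ i)) < M"
          proof
            fix i assume "i \<in> {..n} - {1}"
            then have "i \<noteq> 1" by blast
            then consider "i = 0" | "i \<ge> 2" by linarith
            then show "av (Bc i * (x ^ i - y ^ i)) < M"
            proof cases
              case 1 then show ?thesis using M0 av_0[OF na] by simp
            next
              case 2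
              define S where "S = (\<Sum>k<i. y ^ (i - Suc k) * x ^ k)"
              have "x ^ i - y ^ i = (x - y) * S" unfolding S_def by (rule power_diff_sumr2)
              then have "av (Bc i * (x ^ i - y ^ i)) = av (x - y) * (av (Bc i) * av S)"
                by (simp add: av_mult[OF na])
              moreover have "av S \<le> \<rho> ^ (i - 1)"
                unfolding S_def
              proof (rule av_sum_le[OF na])
                show "\<forall>k\<in>{..<i}. av (y ^ (i - Suc k) * x ^ k) \<le> \<rho> ^ (i - 1)"
                proof
                  fix k assume "k \<in> {..<i}"
                  then have "\<rho> ^ (i - 1) = \<rho> ^ (i - Suc k) * \<rho> ^ k" by (simp add: power_add[symmetric])
                  moreover have "av y ^ (i - Suc k) \<le> \<rho> ^ (i - Suc k)"
                    using av_nonneg[OF na, of y] \<rho>_def by (simp add: power_mono)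
                  moreover have "av x ^ k \<le> \<rho> ^ k"
                    using av_nonneg[OF na, of x] \<rho>_def by (simp add: power_mono)
                  moreover have "av y ^ (i - Suc k) * av x ^ k \<le> \<rho> ^ (i - Suc k) * \<rho> ^ k"
                    by (rule mult_mono) (use calculation \<rho>0 av_nonneg[OF na] in auto)
                  ultimately show "av (y ^ (i - Suc k) * x ^ k) \<le> \<rho> ^ (i - 1)"
                    by (simp add: av_mult[OF na] av_power[OF na])
                qed
              qed (use \<rho>0 in auto)
              ultimately have "av (Bc i * (x ^ i - y ^ i)) \<le> av (x - y) * (av (Bc i) * \<rho> ^ (i - 1))"
                by (simp add: mult_left_mono av_nonneg[OF na])
              also have "\<dots> < av (x - y) * av (A 1)"
                using Bbound[OF 2] M0 A1pos unfolding M_def by (simp add: zero_less_mult_iff)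
              finally show ?thesis unfolding M_def by (simp add: mult.commute)
            qed
          qed
        qed
        moreover have "av (- (Bc 1 * (x - y))) = M"
          unfolding M_def using B1 by (simp add: av_neg[OF na] av_mult[OF na])
        ultimately show False using eq by simp
      qed
    qed
  qed
qed

end
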